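(* Let $r\ge 3$ and $1\le t\le r-2$ be integers. If $\mathcal F\subseteq X_1\times\dots\times X_r$ is coordinate-wise shifted and is a non-trivial $t$-intersecting family, then the family of projections $\mathcal P(\mathcal F)\subseteq 2^{[r]}$ is non-trivial $t$-intersecting, i.e. $|A\cap B|\ge t$ for all $A,B\in\mathcal P(\mathcal F)$ and $\bigl|\bigcap_{P\in\mathcal P(\mathcal F)}P\bigr|<t$.
   Context: Let $X_\ell=[n_\ell]$ for $1\le \ell\le r$, with $n_\ell\ge2$. For $A,B\in X_1\times\dots\times X_r$, write $A\cap B=\{\ell:A[\ell]=B[\ell]\}$ ($A[\ell]$ the $\ell$-th coordinate). $\mathcal F$ is $t$-intersecting if $|A\cap B|\ge t$ for all $A,B\in\mathcal F$; $\bigcap\mathcal F$ is the set of coordinates $\ell$ on which all members of $\mathcal F$ agree; a $t$-intersecting $\mathcal F$ is non-trivial if $|\bigcap\mathcal F|<t$. The projection of $F$ is $\mathcal P(F)=\{\ell\in[r]:F[\ell]=1\}$ and $\mathcal P(\mathcal F)=\{\mathcal P(F):F\in\mathcal F\}$. For $1\le\ell\le r$ and $1<j\le n_\ell$, the shift $S^{(\ell)}_j$ acts on $F\in\mathcal F$ by: if $F[\ell]=j$ and the sequence $F'$ obtained from $F$ by replacing its $\ell$-th coordinate by $1$ is not in $\mathcal F$, then $S^{(\ell)}_j(F)=F'$; otherwise $S^{(\ell)}_j(F)=F$. Set $S^{(\ell)}_j(\mathcal F)=\{S^{(\ell)}_j(F):F\in\mathcal F\}$. $\mathcal F$ is $\ell$-shifted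 if $S^{(\ell)}_j(\mathcal F)=\mathcal F$ for all $1<j\le n_\ell$, and coordinate-wise shifted if it is $\ell$-shifted for every $1\le\ell\le r$. *)

theory Defs
  imports Main "HOL-Library.FuncSet"
begin

text \<open>Sequences in X_1 x ... x X_r are functions on coordinates {1..r}
  (extensional: undefined outside), with X_l = {1..n l}.\<close>

definition prodspace :: "nat \<Rightarrow> (nat \<Rightarrow> nat) \<Rightarrow> (nat \<Rightarrow> nat) set" where
  "prodspace r n = PiE {1..r} (\<lambda>l. {1..n l})"

definition agree :: "nat \<Rightarrow> (nat \<Rightarrow> nat) \<Rightarrow> (nat \<Rightarrow> nat) \<Rightarrow> nat set" where
  "agree r A B = {l \<in> {1..r}. A l = B l}"

definition t_intersecting :: "nat \<Rightarrow> nat \<Rightarrow> (nat \<Rightarrow> nat) set \<Rightarrow> bool" where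
  "t_intersecting r t FF \<longleftrightarrow> (\<forall>A\<in>FF. \<forall>B\<in>FF. card (agree r A B) \<ge> t)"

definition common_coords :: "nat \<Rightarrow> (nat \<Rightarrow> nat) set \<Rightarrow> nat set" where
  "common_coords r FF = {l \<in> {1..r}. \<forall>A\<in>FF. \<forall>B\<in>FF. A l = B l}"

definition nontrivial_t_intersecting :: "nat \<Rightarrow> nat \<Rightarrow> (nat \<Rightarrow> nat) set \<Rightarrow> bool" where
  "nontrivial_t_intersecting r t FF \<longleftrightarrow> t_intersecting r t FF \<and> card (common_coords r FF) < t"

definition shift_elem :: "nat \<Rightarrow> nat \<Rightarrow> (nat \<Rightarrow> nat) set \<Rightarrow> (nat \<Rightarrow> nat) \<Rightarrow> (nat \<Rightarrow> nat)" where
  "shift_elem l j FF F = (if F l = j \<and> F(l := 1) \<notin> FF then F(l := 1) else F)"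

definition shift_family :: "nat \<Rightarrow> nat \<Rightarrow> (nat \<Rightarrow> nat) set \<Rightarrow> (nat \<Rightarrow> nat) set" where
  "shift_family l j FF = shift_elem l j FF ` FF"

definition coord_shifted :: "nat \<Rightarrow> (nat \<Rightarrow> nat) \<Rightarrow> (nat \<Rightarrow> nat) set \<Rightarrow> bool" where
  "coord_shifted r n FF \<longleftrightarrow> (\<forall>l\<in>{1..r}. \<forall>j. 1 < j \<and> j \<le> n l \<longrightarrow> shift_family l j FF = FF)"

definition proj :: "nat \<Rightarrow> (nat \<Rightarrow> nat) \<Rightarrow> nat set" where
  "proj r F = {l \<in> {1..r}. F l = 1}"

definition set_t_intersecting :: "nat \<Rightarrow> nat set set \<Rightarrow> bool" where
  "set_t_intersecting t P \<longleftrightarrow> (\<forall>A\<in>P. \<forall>B\<in>P. card (A \<inter> B) \<ge> t)"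

text \<open>Intersection of a family of subsets of [r] (taken inside [r]).\<close>
definition set_common :: "nat \<Rightarrow> nat set set \<Rightarrow> nat set" where
  "set_common r P = {1..r} \<inter> \<Inter> P"

end

theory Submission
  imports Defs
begin

lemma down1:
  assumes "FF \<subseteq> prodspace r n" and "coord_shifted r n FF"
    and "F \<in> FF" and "l \<in> {1..r}"
  shows "F(l := 1) \<in> FF"
proof (cases "F l = 1")
  case True
  then show ?thesis using assms(3) by (metis fun_upd_triv)
next
  case False
  have "F \<in> prodspace r n" using assms by blast
  then have "F l \<in> {1..n l}" using assms(4) unfolding prodspace_def by (auto simp: PiE_def Pi_def)
  with False have j: "1 < F l" "F l \<le> n l" by auto
  have eq: "shift_family l (F l) FF = FF" using assms(2,4) j unfolding coord_shifted_def by blast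
  show ?thesis
  proof (rule ccontr)
    assume "F(l := 1) \<notin> FF"
    then have "shift_elem l (F l) FF F = F(l := 1)" unfolding shift_elem_def by simp
    then have "F(l := 1) \<in> shift_family l (F l) FF" unfolding shift_family_def using assms(3) by (metis imageI)
    with eq \<open>F(l := 1) \<notin> FF\<close> show False by simp
  qed
qed

lemma downU:
  assumes "FF \<subseteq> prodspace r n" and "coord_shifted r n FF"
    and "finite U" and "U \<subseteq> {1..r}"
  shows "\<forall>F\<in>FF. (\<lambda>l. if l \<in> U then 1 else F l) \<in> FF"
  using assms(3,4)
proof (induction U rule: finite_induct)
  case empty
  then show ?case by simp
next
  case (insert x U)
  show ?case
  proof
    fix F assume "F \<in> FF"
    then have G: "(\<lambda>l. if l \<in> U then 1 else F l) \<in> FF" using insert by auto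
    have "x \<in> {1..r}" using insert by auto
    from down1[OF assms(1,2) G this]
    have "(\<lambda>l. if l \<in> U then 1 else F l)(x := 1) \<in> FF" .
    moreover have "(\<lambda>l. if l \<in> U then 1 else F l)(x := 1) = (\<lambda>l. if l \<in> insert x U then 1 else F l)"
      by auto
    ultimately show "(\<lambda>l. if l \<in> insert x U then 1 else F l) \<in> FF" by simp
  qed
qed

theorem lemma2p1:
  fixes r t :: nat and n :: "nat \<Rightarrow> nat" and FF :: "(nat \<Rightarrow> nat) set"
  assumes "r \<ge> 3" and "1 \<le> t" and "t \<le> r - 2"
    and "\<forall>l\<in>{1..r}. n l \<ge> 2"
    and "FF \<subseteq> prodspace r n"
    and "coord_shifted r n FF"
    and "nontrivial_t_intersecting r t FF"
  shows "set_t_intersecting t (proj r ` FF) \<and> card (set_common r (proj r ` FF)) < t"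
proof
  have ti: "t_intersecting r t FF" and ct: "card (common_coords r FF) < t"
    using assms(7) unfolding nontrivial_t_intersecting_def by auto
  show "set_t_intersecting t (proj r ` FF)"
    unfolding set_t_intersecting_def
  proof (intro ballI)
    fix PA PB assume "PA \<in> proj r ` FF" "PB \<in> proj r ` FF"
    then obtain A B where A: "A \<in> FF" "PA = proj r A" and B: "B \<in> FF" "PB = proj r B" by auto
    define U where "U = {l \<in> {1..r}. B l \<noteq> 1}"
    have "finite U" "U \<subseteq> {1..r}" unfolding U_def by auto
    then have A': "(\<lambda>l. if l \<in> U then 1 else A l) \<in> FF" using downU[OF assms(5,6)] A by blast
    have "agree r (\<lambda>l. if l \<in> U then 1 else A l) B = PA \<inter> PB"
      unfolding agree_def A B proj_def U_def by auto
    moreover have "card (agree r (\<lambda>l. if l \<in> U then 1 else A l) B) \<ge> t"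
      using ti A' B unfolding t_intersecting_def by blast
    ultimately show "t \<le> card (PA \<inter> PB)" by simp
  qed
  have ne: "FF \<noteq> {}"
  proof
    assume "FF = {}"
    then have "common_coords r FF = {1..r}" unfolding common_coords_def by auto
    with ct assms(3) show False by simp
  qed
  have "set_common r (proj r ` FF) \<subseteq> common_coords r FF"
  proof
    fix x assume "x \<in> set_common r (proj r ` FF)"
    then have x: "x \<in> {1..r}" "\<forall>F\<in>FF. x \<in> proj r F" unfolding set_common_def by auto
    then have "\<forall>F\<in>FF. F x = 1" unfolding proj_def by auto
    then have "\<forall>A\<in>FF. \<forall>B\<in>FF. A x = B x" by metis
    with x(1) show "x \<in> common_coords r FF" unfolding common_coords_def by blast
  qed
  then have "card (set_common r (proj r ` FF)) \<le> card (common_coords r FF)"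
    by (rule card_mono[rotated]) (simp add: common_coords_def)
  with ct show "card (set_common r (proj r ` FF)) < t" by simp
qed

end
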